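(* Let $f:\{0,1\}^m\to\mathbb{R}$ (viewed as a set function on $2^{[m]}$) be non-negative, monotone non-decreasing and submodular, with marginals $f(S\cup\{i\})-f(S)\in[0,1]$ for all $S\subseteq[m]$, $i\notin S$. Let $t\in\mathbb{R}$ and $\theta<0$, and define $g_{t,\theta}(x)=e^{-\theta t}\,\mathbb{E}_{X\sim\mathcal{D}(x)}\big[e^{\theta f(X)}\big]$ for $x\in[0,1]^m$. Then for every $x\in[0,1]^m$ and all distinct $a,b\in[m]$, the function $z\mapsto g_{t,\theta}(x+z(e_a-e_b))$ is concave on the interval $\{z: x+z(e_a-e_b)\in[0,1]^m\}$.
   Context: For $x\in[0,1]^m$, $\mathcal{D}(x)$ denotes the product distribution on $\{0,1\}^m$ with $\Pr[X_i=1]=x_i$ independently; a vector in $\{0,1\}^m$ is identified with the subset of $[m]$ it indicates. $e_i$ is the $i$-th standard basis vector. *)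

theory Defs
  imports "HOL-Analysis.Analysis"
begin

text \<open>Ground set [m] = {1..m}; subsets of [m] are identified with 0/1 vectors.\<close>

definition monotone_setfun :: "nat \<Rightarrow> (nat set \<Rightarrow> real) \<Rightarrow> bool" where
  "monotone_setfun m f \<longleftrightarrow> (\<forall>S T. S \<subseteq> T \<and> T \<subseteq> {1..m} \<longrightarrow> f S \<le> f T)"

definition submodular :: "nat \<Rightarrow> (nat set \<Rightarrow> real) \<Rightarrow> bool" where
  "submodular m f \<longleftrightarrow> (\<forall>S T. S \<subseteq> {1..m} \<and> T \<subseteq> {1..m} \<longrightarrow>
      f (S \<union> T) + f (S \<inter> T) \<le> f S + f T)"

definition prod_prob :: "nat \<Rightarrow> (nat \<Rightarrow> real) \<Rightarrow> nat set \<Rightarrow> real" where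
  "prod_prob m x S = (\<Prod>i\<in>S. x i) * (\<Prod>i\<in>{1..m} - S. 1 - x i)"

definition expect_D :: "nat \<Rightarrow> (nat \<Rightarrow> real) \<Rightarrow> (nat set \<Rightarrow> real) \<Rightarrow> real" where
  "expect_D m x h = (\<Sum>S\<in>Pow {1..m}. prod_prob m x S * h S)"

definition g_fun :: "nat \<Rightarrow> (nat set \<Rightarrow> real) \<Rightarrow> real \<Rightarrow> real \<Rightarrow> (nat \<Rightarrow> real) \<Rightarrow> real" where
  "g_fun m f t \<theta> x = exp (- \<theta> * t) * expect_D m x (\<lambda>S. exp (\<theta> * f S))"

end

theory Submission
  imports Defs
begin

definition pp :: "nat set \<Rightarrow> (nat \<Rightarrow> real) \<Rightarrow> nat set \<Rightarrow> real" where
  "pp I y S = (\<Prod>i\<in>S. y i) * (\<Prod>i\<in>I - S. 1 - y i)"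

definition EE :: "nat set \<Rightarrow> (nat \<Rightarrow> real) \<Rightarrow> (nat set \<Rightarrow> real) \<Rightarrow> real" where
  "EE I y h = (\<Sum>S\<in>Pow I. pp I y S * h S)"

lemma pp_ins_out:
  assumes "finite I" "a \<notin> I" "S \<subseteq> I"
  shows "pp (insert a I) y S = (1 - y a) * pp I y S"
proof -
  have "insert a I - S = insert a (I - S)" using assms by auto
  moreover have "finite (I - S)" "a \<notin> I - S" using assms by auto
  ultimately show ?thesis unfolding pp_def by (simp add: algebra_simps)
qed

lemma pp_ins_in:
  assumes "finite I" "a \<notin> I" "S \<subseteq> I"
  shows "pp (insert a I) y (insert a S) = y a * pp I y S"
proof -
  have "insert a I - insert a S = I - S" using assms by auto
  moreover have "finite S" "a \<notin> S" using assms finite_subset by auto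
  ultimately show ?thesis unfolding pp_def by (simp add: algebra_simps)
qed

lemma EE_insert:
  assumes "finite I" "a \<notin> I"
  shows "EE (insert a I) y h = y a * EE I y (\<lambda>S. h (insert a S)) + (1 - y a) * EE I y h"
proof -
  have disj: "Pow I \<inter> insert a ` Pow I = {}" using assms by auto
  have inj: "inj_on (insert a) (Pow I)" using assms unfolding inj_on_def by auto
  have "EE (insert a I) y h = (\<Sum>S\<in>Pow I. pp (insert a I) y S * h S)
          + (\<Sum>S\<in>insert a ` Pow I. pp (insert a I) y S * h S)"
    unfolding EE_def Pow_insert using assms disj by (intro sum.union_disjoint) auto
  also have "(\<Sum>S\<in>insert a ` Pow I. pp (insert a I) y S * h S)
      = (\<Sum>S\<in>Pow I. pp (insert a I) y (insert a S) * h (insert a S))"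
    using inj by (simp add: sum.reindex)
  also have "\<dots> = (\<Sum>S\<in>Pow I. y a * (pp I y S * h (insert a S)))"
    using assms by (intro sum.cong) (auto simp: pp_ins_in)
  also have "(\<Sum>S\<in>Pow I. pp (insert a I) y S * h S) = (\<Sum>S\<in>Pow I. (1 - y a) * (pp I y S * h S))"
    using assms by (intro sum.cong) (auto simp: pp_ins_out)
  finally show ?thesis unfolding EE_def by (simp add: sum_distrib_left)
qed

lemma EE_cong:
  assumes "\<forall>i\<in>I. y i = y' i"
  shows "EE I y h = EE I y' h"
  unfolding EE_def pp_def
  by (intro sum.cong refl arg_cong2[where f="(*)"] prod.cong) (use assms in auto)

lemma EE_nonneg:
  assumes "finite I" "\<forall>i\<in>I. 0 \<le> y i \<and> y i \<le> 1" "\<forall>S\<subseteq>I. 0 \<le> h S"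
  shows "0 \<le> EE I y h"
  unfolding EE_def pp_def
proof (intro sum_nonneg mult_nonneg_nonneg prod_nonneg)
  fix S i assume "S \<in> Pow I" "i \<in> S" then show "0 \<le> y i" using assms by auto
next
  fix S i assume "S \<in> Pow I" "i \<in> I - S" then show "0 \<le> 1 - y i" using assms by auto
next
  fix S assume "S \<in> Pow I" then show "0 \<le> h S" using assms by auto
qed

lemma EE_comb:
  "EE I y h1 - EE I y h2 - EE I y h3 + EE I y h4 = EE I y (\<lambda>S. h1 S - h2 S - h3 S + h4 S)"
  unfolding EE_def by (simp add: sum.distrib sum_subtractf algebra_simps)

lemma quad_concave:
  fixes c d e :: real
  assumes "\<forall>z. G z = c * z^2 + d * z + e" "c \<le> 0" "convex S"
  shows "concave_on S G"
  unfolding concave_on_iff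
proof (intro conjI assms ballI allI impI)
  fix x y u v :: real assume uv: "0 \<le> u" "0 \<le> v" "u + v = 1"
  have v: "v = 1 - u" using uv by simp
  have "G (u *\<^sub>R x + v *\<^sub>R y) - (u * G x + v * G y) = - c * u * v * (x - y)^2"
    using assms(1) unfolding v by (simp add: power2_eq_square algebra_simps)
  moreover have "0 \<le> (- c) * u * v * (x - y)^2"
    by (intro mult_nonneg_nonneg) (use uv assms(2) in auto)
  moreover have "- c * u * v * (x - y)^2 = (- c) * u * v * (x - y)^2" by simp
  ultimately show "u * G x + v * G y \<le> G (u *\<^sub>R x + v *\<^sub>R y)" by linarith
qed

lemma exp_ineq:
  fixes \<theta> u \<alpha> \<beta> \<gamma> :: real
  assumes "\<theta> < 0" "0 \<le> \<alpha>" "0 \<le> \<beta>" "\<gamma> \<le> \<alpha> + \<beta>"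
  shows "exp (\<theta> * (u + \<alpha>)) + exp (\<theta> * (u + \<beta>)) \<le> exp (\<theta> * (u + \<gamma>)) + exp (\<theta> * u)"
proof -
  have A: "exp (\<theta> * \<alpha>) \<le> 1" "exp (\<theta> * \<beta>) \<le> 1" using assms
    by (simp_all add: mult_nonpos_nonneg)
  have B: "exp (\<theta> * \<alpha>) * exp (\<theta> * \<beta>) \<le> exp (\<theta> * \<gamma>)"
    using assms by (simp add: exp_add[symmetric] distrib_left[symmetric] mult_left_mono_neg)
  have "0 \<le> (1 - exp (\<theta> * \<alpha>)) * (1 - exp (\<theta> * \<beta>))" using A by simp
  hence "exp (\<theta> * \<alpha>) + exp (\<theta> * \<beta>) \<le> exp (\<theta> * \<gamma>) + 1" using B by (simp add: algebra_simps)
  hence "exp (\<theta> * u) * (exp (\<theta> * \<alpha>) + exp (\<theta> * \<beta>)) \<le> exp (\<theta> * u) * (exp (\<theta> * \<gamma>) + 1)"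
    by simp
  thus ?thesis by (simp add: distrib_left exp_add[symmetric] algebra_simps)
qed

lemma affine01:
  fixes p q z1 z2 u v :: real
  assumes "0 \<le> p + q * z1" "p + q * z1 \<le> 1" "0 \<le> p + q * z2" "p + q * z2 \<le> 1"
    "0 \<le> u" "0 \<le> v" "u + v = 1"
  shows "0 \<le> p + q * (u * z1 + v * z2) \<and> p + q * (u * z1 + v * z2) \<le> 1"
proof -
  have e: "p + q * (u * z1 + v * z2) = u * (p + q * z1) + v * (p + q * z2)"
  proof -
    have "p = p * (u + v)" using assms(7) by simp
    then show ?thesis by (simp add: algebra_simps)
  qed
  have "u * (p + q * z1) \<le> u" "v * (p + q * z2) \<le> v"
    using assms by (simp_all add: mult_left_le)
  then show ?thesis unfolding e using assms by simp
qed

theorem claim3p4: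
  fixes m :: nat and f :: "nat set \<Rightarrow> real" and t \<theta> :: real
    and x :: "nat \<Rightarrow> real" and a b :: nat
  assumes nonneg: "\<forall>S. S \<subseteq> {1..m} \<longrightarrow> 0 \<le> f S"
    and mono: "monotone_setfun m f"
    and submod: "submodular m f"
    and marg: "\<forall>S i. S \<subseteq> {1..m} \<and> i \<in> {1..m} \<and> i \<notin> S \<longrightarrow>
                 0 \<le> f (insert i S) - f S \<and> f (insert i S) - f S \<le> 1"
    and theta: "\<theta> < 0"
    and x01: "\<forall>i\<in>{1..m}. 0 \<le> x i \<and> x i \<le> 1"
    and ab: "a \<in> {1..m}" "b \<in> {1..m}" "a \<noteq> b"
  shows "concave_on {z. \<forall>i\<in>{1..m}. 0 \<le> (x(a := x a + z, b := x b - z)) i \<and>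
                                     (x(a := x a + z, b := x b - z)) i \<le> 1}
           (\<lambda>z. g_fun m f t \<theta> (x(a := x a + z, b := x b - z)))"
proof -
  define y where "y z = x(a := x a + z, b := x b - z)" for z
  define R where "R = {1..m} - {a, b}"
  define h where "h S = exp (\<theta> * f S)" for S
  have yc: "y z i = x i + z * (if i = b then -1 else if i = a then 1 else 0)" for z i
    unfolding y_def using ab by auto
  have finR: "finite R" unfolding R_def by simp
  have I: "{1..m} = insert a (insert b R)" unfolding R_def using ab by auto
  have aR: "a \<notin> insert b R" and bR: "b \<notin> R" unfolding R_def using ab by auto
  have yR: "\<forall>i\<in>R. y z i = x i" for z unfolding R_def y_def by auto
  define P1 where "P1 = EE R x (\<lambda>S. h (insert a (insert b S)))"
  define P2 where "P2 = EE R x (\<lambda>S. h (insert a S))"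
  define P3 where "P3 = EE R x (\<lambda>S. h (insert b S))"
  define P4 where "P4 = EE R x h"
  have ED: "expect_D m w k = EE {1..m} w k" for w k
    unfolding expect_D_def EE_def prod_prob_def pp_def by simp
  have G: "expect_D m (y z) h = (x a + z) * ((x b - z) * P1 + (1 - (x b - z)) * P2)
      + (1 - (x a + z)) * ((x b - z) * P3 + (1 - (x b - z)) * P4)" for z
  proof -
    have "expect_D m (y z) h = y z a * (y z b * EE R (y z) (\<lambda>S. h (insert a (insert b S)))
          + (1 - y z b) * EE R (y z) (\<lambda>S. h (insert a S)))
        + (1 - y z a) * (y z b * EE R (y z) (\<lambda>S. h (insert b S)) + (1 - y z b) * EE R (y z) h)"
      unfolding ED I using finR aR bR by (simp add: EE_insert insert_commute)
    also have "\<dots> = (x a + z) * ((x b - z) * P1 + (1 - (x b - z)) * P2)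
      + (1 - (x a + z)) * ((x b - z) * P3 + (1 - (x b - z)) * P4)"
      unfolding P1_def P2_def P3_def P4_def EE_cong[OF yR[of z]]
      unfolding y_def using ab by simp
    finally show ?thesis .
  qed
  have Dnn: "0 \<le> P1 - P2 - P3 + P4"
    unfolding P1_def P2_def P3_def P4_def EE_comb
  proof (rule EE_nonneg[OF finR])
    show "\<forall>i\<in>R. 0 \<le> x i \<and> x i \<le> 1" using x01 unfolding R_def by auto
    show "\<forall>S\<subseteq>R. 0 \<le> h (insert a (insert b S)) - h (insert a S) - h (insert b S) + h S"
    proof (intro allI impI)
      fix S assume SR: "S \<subseteq> R"
      have S1: "S \<subseteq> {1..m}" "a \<notin> S" "b \<notin> S" using SR unfolding R_def by auto
      have ma: "0 \<le> f (insert a S) - f S" using marg S1 ab by blast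
      have mb: "0 \<le> f (insert b S) - f S" using marg S1 ab by blast
      have "f (insert a S \<union> insert b S) + f (insert a S \<inter> insert b S) \<le> f (insert a S) + f (insert b S)"
        using submod S1 ab unfolding submodular_def
        by (metis insert_subset atLeastAtMost_iff)
      moreover have "insert a S \<union> insert b S = insert a (insert b S)"
        "insert a S \<inter> insert b S = S" using S1 ab by auto
      ultimately have sm: "f (insert a (insert b S)) - f S \<le> (f (insert a S) - f S) + (f (insert b S) - f S)"
        by simp
      from exp_ineq[OF theta ma mb sm, of "f S"]
      show "0 \<le> h (insert a (insert b S)) - h (insert a S) - h (insert b S) + h S"
        unfolding h_def by simp
    qed
  qed
  define K where "K = exp (- \<theta> * t)"
  have Kp: "0 < K" unfolding K_def by simp
  show ?thesis
  proof (rule quad_concave)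
    show "\<forall>z. g_fun m f t \<theta> (x(a := x a + z, b := x b - z)) =
      (- K * (P1 - P2 - P3 + P4)) * z^2
      + (K * (x a * (P2 - P1) + x b * P1 + (1 - x b) * P2 + (1 - x a) * (P4 - P3) - x b * P3 - (1 - x b) * P4)) * z
      + (K * (x a * (x b * P1 + (1 - x b) * P2) + (1 - x a) * (x b * P3 + (1 - x b) * P4)))"
    proof
      fix z
      have "g_fun m f t \<theta> (x(a := x a + z, b := x b - z)) = K * expect_D m (y z) h"
        unfolding g_fun_def K_def y_def h_def by simp
      also have "\<dots> = K * ((x a + z) * ((x b - z) * P1 + (1 - (x b - z)) * P2)
      + (1 - (x a + z)) * ((x b - z) * P3 + (1 - (x b - z)) * P4))" by (simp add: G)
      finally show "g_fun m f t \<theta> (x(a := x a + z, b := x b - z)) =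
      (- K * (P1 - P2 - P3 + P4)) * z^2
      + (K * (x a * (P2 - P1) + x b * P1 + (1 - x b) * P2 + (1 - x a) * (P4 - P3) - x b * P3 - (1 - x b) * P4)) * z
      + (K * (x a * (x b * P1 + (1 - x b) * P2) + (1 - x a) * (x b * P3 + (1 - x b) * P4)))"
        by (simp add: power2_eq_square algebra_simps)
    qed
    show "- K * (P1 - P2 - P3 + P4) \<le> 0" using Kp Dnn by simp
    show "convex {z. \<forall>i\<in>{1..m}. 0 \<le> (x(a := x a + z, b := x b - z)) i \<and>
                                     (x(a := x a + z, b := x b - z)) i \<le> 1}"
      unfolding convex_def
    proof (intro allI impI ballI, clarsimp simp only: mem_Collect_eq)
      fix z1 z2 u v :: real and i
      assume h1: "\<forall>i\<in>{1..m}. 0 \<le> (x(a := x a + z1, b := x b - z1)) i \<and> (x(a := x a + z1, b := x b - z1)) i \<le> 1"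
        and h2: "\<forall>i\<in>{1..m}. 0 \<le> (x(a := x a + z2, b := x b - z2)) i \<and> (x(a := x a + z2, b := x b - z2)) i \<le> 1"
        and uv: "0 \<le> u" "0 \<le> v" "u + v = 1" and i: "i \<in> {1..m}"
      show "0 \<le> (x(a := x a + (u *\<^sub>R z1 + v *\<^sub>R z2), b := x b - (u *\<^sub>R z1 + v *\<^sub>R z2))) i \<and>
          (x(a := x a + (u *\<^sub>R z1 + v *\<^sub>R z2), b := x b - (u *\<^sub>R z1 + v *\<^sub>R z2))) i \<le> 1"
      proof -
        define q :: real where "q = (if i = b then -1 else if i = a then 1 else 0)"
        have yc': "(x(a := x a + z, b := x b - z)) i = x i + q * z" for z
          using yc[of z i] unfolding y_def q_def by simp
        show ?thesis unfolding yc' scaleR_conv_of_real of_real_def[symmetric] of_real_eq_id id_def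
          using affine01[OF _ _ _ _ uv, of "x i" q z1 z2] h1[rule_format, OF i] h2[rule_format, OF i]
          unfolding yc' by simp
      qed
    qed
  qed
qed

end
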